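(* For every integer $n\ge 4$, $\mathrm{wdim}_3(K_n\times K_n)=2n$.
   Context: $K_n\times K_n$ is the direct product of two complete graphs on $n$ vertices: vertex set $[n]\times[n]$ with $[n]=\{1,\dots,n\}$, and $(i,j)$ adjacent to $(i',j')$ iff $i\ne i'$ and $j\ne j'$. For a connected graph $G$ with distance $d_G$, vertices $x,y,z$ and $S\subseteq V(G)$, let $\Delta_z(x,y)=|d_G(x,z)-d_G(y,z)|$ and $\Delta_S(x,y)=\sum_{z\in S}\Delta_z(x,y)$. A set $S$ is a weak $k$-resolving set if $\Delta_S(x,y)\ge k$ for all distinct $x,y\in V(G)$, and $\mathrm{wdim}_k(G)$ is the minimum cardinality of a weak $k$-resolving set of $G$. *)

theory Defs
  imports Main
begin

definition is_walk :: "'a set \<Rightarrow> ('a \<Rightarrow> 'a \<Rightarrow> bool) \<Rightarrow> 'a list \<Rightarrow> bool" where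
  "is_walk V E p \<longleftrightarrow> p \<noteq> [] \<and> set p \<subseteq> V \<and> (\<forall>i < length p - 1. E (p ! i) (p ! Suc i))"

definition gdist :: "'a set \<Rightarrow> ('a \<Rightarrow> 'a \<Rightarrow> bool) \<Rightarrow> 'a \<Rightarrow> 'a \<Rightarrow> nat" where
  "gdist V E x y = (LEAST k. \<exists>p. is_walk V E p \<and> hd p = x \<and> last p = y \<and> length p = Suc k)"

definition delta_vertex :: "'a set \<Rightarrow> ('a \<Rightarrow> 'a \<Rightarrow> bool) \<Rightarrow> 'a \<Rightarrow> 'a \<Rightarrow> 'a \<Rightarrow> nat" where
  "delta_vertex V E z x y = nat \<bar>int (gdist V E x z) - int (gdist V E y z)\<bar>"

definition delta_set :: "'a set \<Rightarrow> ('a \<Rightarrow> 'a \<Rightarrow> bool) \<Rightarrow> 'a set \<Rightarrow> 'a \<Rightarrow> 'a \<Rightarrow> nat" where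
  "delta_set V E S x y = (\<Sum>z\<in>S. delta_vertex V E z x y)"

definition weak_k_resolving :: "'a set \<Rightarrow> ('a \<Rightarrow> 'a \<Rightarrow> bool) \<Rightarrow> nat \<Rightarrow> 'a set \<Rightarrow> bool" where
  "weak_k_resolving V E k S \<longleftrightarrow> S \<subseteq> V \<and>
     (\<forall>x\<in>V. \<forall>y\<in>V. x \<noteq> y \<longrightarrow> delta_set V E S x y \<ge> k)"

definition wdim :: "'a set \<Rightarrow> ('a \<Rightarrow> 'a \<Rightarrow> bool) \<Rightarrow> nat \<Rightarrow> nat" where
  "wdim V E k = (LEAST m. \<exists>S. weak_k_resolving V E k S \<and> card S = m)"

definition KxK_V :: "nat \<Rightarrow> (nat \<times> nat) set" where
  "KxK_V n = {1..n} \<times> {1..n}"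

definition KxK_E :: "(nat \<times> nat) \<Rightarrow> (nat \<times> nat) \<Rightarrow> bool" where
  "KxK_E u v \<longleftrightarrow> fst u \<noteq> fst v \<and> snd u \<noteq> snd v"

end

theory Submission
  imports Defs
begin

definition dd :: "nat \<times> nat \<Rightarrow> nat \<times> nat \<Rightarrow> nat" where
  "dd x y = (if x = y then 0 else if KxK_E x y then 1 else 2)"

lemma avoid2: "n \<ge> 3 \<Longrightarrow> \<exists>c\<in>{1..(n::nat)}. c \<noteq> u \<and> c \<noteq> v"
proof -
  assume "n \<ge> 3"
  have "\<exists>c\<in>{1,2,3::nat}. c \<noteq> u \<and> c \<noteq> v" by auto
  then show ?thesis using \<open>n \<ge> 3\<close> by auto
qed

lemma gdist_KxK:
  assumes n: "n \<ge> 3" and x: "x \<in> KxK_V n" and y: "y \<in> KxK_V n"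
  shows "gdist (KxK_V n) KxK_E x y = dd x y"
  unfolding gdist_def
proof (rule Least_equality)
  show "\<exists>p. is_walk (KxK_V n) KxK_E p \<and> hd p = x \<and> last p = y \<and> length p = Suc (dd x y)"
  proof (cases "x = y")
    case True
    then show ?thesis using x by (intro exI[of _ "[x]"]) (auto simp: is_walk_def dd_def)
  next
    case ne: False
    show ?thesis
    proof (cases "KxK_E x y")
      case True
      then show ?thesis using x y ne
        by (intro exI[of _ "[x,y]"]) (auto simp: is_walk_def dd_def)
    next
      case False
      obtain a b a' b' where xy: "x = (a,b)" "y = (a',b')" by fastforce
      obtain c where c: "c \<in> {1..n}" "c \<noteq> a" "c \<noteq> a'" using avoid2[OF n] by blast
      obtain d where d: "d \<in> {1..n}" "d \<noteq> b" "d \<noteq> b'" using avoid2[OF n] by blast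
      have w: "(c,d) \<in> KxK_V n" using c d by (simp add: KxK_V_def)
      have walk: "is_walk (KxK_V n) KxK_E [x,(c,d),y]"
        unfolding is_walk_def using x y w c d xy
        by (auto simp: KxK_E_def less_Suc_eq nth_Cons')
      show ?thesis using False ne walk
        by (intro exI[of _ "[x,(c,d),y]"]) (auto simp: dd_def)
    qed
  qed
next
  fix k assume "\<exists>p. is_walk (KxK_V n) KxK_E p \<and> hd p = x \<and> last p = y \<and> length p = Suc k"
  then obtain p where p: "is_walk (KxK_V n) KxK_E p" "hd p = x" "last p = y" "length p = Suc k" by blast
  show "dd x y \<le> k"
  proof (cases k)
    case 0
    then obtain u where "p = [u]" using p(4) by (auto simp: length_Suc_conv)
    then show ?thesis using p by (simp add: dd_def)
  next
    case (Suc k')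
    show ?thesis
    proof (cases k')
      case 0
      then obtain u v where "p = [u,v]" using p(4) Suc by (auto simp: length_Suc_conv)
      then show ?thesis using p Suc 0 by (auto simp: dd_def is_walk_def)
    next
      case (Suc k'')
      then show ?thesis using \<open>k = Suc k'\<close> by (simp add: dd_def)
    qed
  qed
qed


lemma row_pt: "b \<noteq> b' \<Longrightarrow> nat \<bar>int (dd z (a,b)) - int (dd z (a,b'))\<bar> =
  of_bool (snd z = b) + of_bool (snd z = b') + of_bool (z = (a,b)) + of_bool (z = (a,b'))"
  by (cases z) (auto simp: dd_def KxK_E_def)

lemma col_pt: "a \<noteq> a' \<Longrightarrow> nat \<bar>int (dd z (a,b)) - int (dd z (a',b))\<bar> =
  of_bool (fst z = a) + of_bool (fst z = a') + of_bool (z = (a,b)) + of_bool (z = (a',b))"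
  by (cases z) (auto simp: dd_def KxK_E_def)

lemma diag_pt: "a \<noteq> a' \<Longrightarrow> b \<noteq> b' \<Longrightarrow> nat \<bar>int (dd z (a,b)) - int (dd z (a',b'))\<bar>
  + of_bool (z = (a,b)) + of_bool (z = (a',b')) + 2 * of_bool (z = (a,b')) + 2 * of_bool (z = (a',b)) =
  of_bool (fst z = a) + of_bool (fst z = a') + of_bool (snd z = b) + of_bool (snd z = b')"
  by (cases z) (auto simp: dd_def KxK_E_def)

definition rc :: "(nat \<times> nat) set \<Rightarrow> nat \<Rightarrow> nat" where "rc S a = card (S \<inter> {z. fst z = a})"
definition cc :: "(nat \<times> nat) set \<Rightarrow> nat \<Rightarrow> nat" where "cc S b = card (S \<inter> {z. snd z = b})"

lemma finite_V: "finite (KxK_V n)" by (simp add: KxK_V_def)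

lemma dd_sym: "dd x y = dd y x" by (auto simp: dd_def KxK_E_def)

lemma dv: "n \<ge> 3 \<Longrightarrow> x \<in> KxK_V n \<Longrightarrow> y \<in> KxK_V n \<Longrightarrow> z \<in> KxK_V n \<Longrightarrow>
  delta_vertex (KxK_V n) KxK_E z x y = nat \<bar>int (dd z x) - int (dd z y)\<bar>"
  by (simp add: delta_vertex_def gdist_KxK dd_sym[of z])


lemma ind_sum: "finite S \<Longrightarrow> (\<Sum>z\<in>S. of_bool (z = x) :: nat) = of_bool (x \<in> S)"
proof -
  assume "finite S"
  have "S \<inter> {z. z = x} = (if x \<in> S then {x} else {})" by auto
  then show ?thesis using \<open>finite S\<close> by simp
qed

lemma row_sum:
  assumes n: "n \<ge> 3" and S: "S \<subseteq> KxK_V n" and a: "a \<in> {1..n}" and b: "b \<in> {1..n}" "b' \<in> {1..n}" "b \<noteq> b'"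
  shows "delta_set (KxK_V n) KxK_E S (a,b) (a,b') = cc S b + cc S b' + of_bool ((a,b) \<in> S) + of_bool ((a,b') \<in> S)"
proof -
  have fin: "finite S" using S finite_V finite_subset by blast
  have xy: "(a,b) \<in> KxK_V n" "(a,b') \<in> KxK_V n" using a b by (auto simp: KxK_V_def)
  have "delta_set (KxK_V n) KxK_E S (a,b) (a,b') = (\<Sum>z\<in>S.
     of_bool (snd z = b) + of_bool (snd z = b') + of_bool (z = (a,b)) + of_bool (z = (a,b')))"
    unfolding delta_set_def
    by (rule sum.cong[OF refl], subst dv[OF n xy]) (use S in \<open>auto simp: row_pt[OF b(3)]\<close>)
  also have "\<dots> = cc S b + cc S b' + of_bool ((a,b) \<in> S) + of_bool ((a,b') \<in> S)"
    using fin by (simp add: sum.distrib cc_def ind_sum del: sum_of_bool_eq) (simp add: cc_def)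
  finally show ?thesis .
qed


lemma col_sum:
  assumes n: "n \<ge> 3" and S: "S \<subseteq> KxK_V n" and a: "a \<in> {1..n}" "a' \<in> {1..n}" "a \<noteq> a'" and b: "b \<in> {1..n}"
  shows "delta_set (KxK_V n) KxK_E S (a,b) (a',b) = rc S a + rc S a' + of_bool ((a,b) \<in> S) + of_bool ((a',b) \<in> S)"
proof -
  have fin: "finite S" using S finite_V finite_subset by blast
  have xy: "(a,b) \<in> KxK_V n" "(a',b) \<in> KxK_V n" using a b by (auto simp: KxK_V_def)
  have "delta_set (KxK_V n) KxK_E S (a,b) (a',b) = (\<Sum>z\<in>S.
     of_bool (fst z = a) + of_bool (fst z = a') + of_bool (z = (a,b)) + of_bool (z = (a',b)))"
    unfolding delta_set_def
    by (rule sum.cong[OF refl], subst dv[OF n xy]) (use S in \<open>auto simp: col_pt[OF a(3)]\<close>)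
  also have "\<dots> = rc S a + rc S a' + of_bool ((a,b) \<in> S) + of_bool ((a',b) \<in> S)"
    using fin by (simp add: sum.distrib rc_def ind_sum del: sum_of_bool_eq) (simp add: rc_def)
  finally show ?thesis .
qed

lemma diag_sum:
  assumes n: "n \<ge> 3" and S: "S \<subseteq> KxK_V n" and a: "a \<in> {1..n}" "a' \<in> {1..n}" "a \<noteq> a'"
    and b: "b \<in> {1..n}" "b' \<in> {1..n}" "b \<noteq> b'"
  shows "delta_set (KxK_V n) KxK_E S (a,b) (a',b') + of_bool ((a,b) \<in> S) + of_bool ((a',b') \<in> S)
     + 2 * of_bool ((a,b') \<in> S) + 2 * of_bool ((a',b) \<in> S) = rc S a + rc S a' + cc S b + cc S b'"
proof -
  have fin: "finite S" using S finite_V finite_subset by blast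
  have xy: "(a,b) \<in> KxK_V n" "(a',b') \<in> KxK_V n" using a b by (auto simp: KxK_V_def)
  have "(\<Sum>z\<in>S. nat \<bar>int (dd z (a,b)) - int (dd z (a',b'))\<bar>
  + of_bool (z = (a,b)) + of_bool (z = (a',b')) + 2 * of_bool (z = (a,b')) + 2 * of_bool (z = (a',b))) =
   (\<Sum>z\<in>S. of_bool (fst z = a) + of_bool (fst z = a') + of_bool (snd z = b) + of_bool (snd z = b'))"
    by (rule sum.cong[OF refl]) (rule diag_pt[OF a(3) b(3)])
  moreover have "delta_set (KxK_V n) KxK_E S (a,b) (a',b') = (\<Sum>z\<in>S. nat \<bar>int (dd z (a,b)) - int (dd z (a',b'))\<bar>)"
    unfolding delta_set_def
    by (rule sum.cong[OF refl], subst dv[OF n xy]) (use S in auto)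
  ultimately show ?thesis
    using fin by (simp add: sum.distrib rc_def cc_def ind_sum sum_distrib_left[symmetric] del: sum_of_bool_eq) (simp add: rc_def cc_def)
qed


lemma abstract:
  fixes P :: "nat \<Rightarrow> nat \<Rightarrow> bool"
  assumes n: "n \<ge> 4"
  and sm: "(\<Sum>b\<in>{1..n}. card {a\<in>{1..n}. P a b}) \<le> 2*n - 1"
  and H: "\<And>a b b'. a\<in>{1..n} \<Longrightarrow> b\<in>{1..n} \<Longrightarrow> b'\<in>{1..n} \<Longrightarrow> b\<noteq>b' \<Longrightarrow>
     3 \<le> card {a\<in>{1..n}. P a b} + card {a\<in>{1..n}. P a b'} + of_bool (P a b) + of_bool (P a b')"
  shows "\<exists>b0\<in>{1..n}. \<exists>\<alpha>\<in>{1..n}. {a\<in>{1..n}. P a b0} = {\<alpha>} \<and>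
     (\<forall>b\<in>{1..n}. b\<noteq>b0 \<longrightarrow> card {a\<in>{1..n}. P a b} = 2)"
proof -
  define I where "I = {1..n}"
  define c where "c b = card {a\<in>I. P a b}" for b
  have sm': "(\<Sum>b\<in>I. c b) \<le> 2*n - 1" using sm by (simp add: c_def I_def)
  have H': "\<And>a b b'. a\<in>I \<Longrightarrow> b\<in>I \<Longrightarrow> b'\<in>I \<Longrightarrow> b\<noteq>b' \<Longrightarrow> 3 \<le> c b + c b' + of_bool (P a b) + of_bool (P a b')"
    using H by (simp add: c_def I_def)
  have cardI: "card I = n" by (simp add: I_def)
  have finI: "finite I" by (simp add: I_def)
  obtain b0 where b0: "b0 \<in> I" "c b0 \<le> 1"
  proof (rule ccontr)
    assume "\<not> thesis"
    with that have "\<forall>b\<in>I. 2 \<le> c b" by force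
    then have "(\<Sum>b\<in>I. 2) \<le> (\<Sum>b\<in>I. c b)" by (intro sum_mono) auto
    then show False using sm' cardI n by simp
  qed
  have rem: "(\<Sum>b\<in>I. c b) = c b0 + (\<Sum>b\<in>I-{b0}. c b)" using b0(1) finI by (simp add: sum.remove)
  have cardI': "card (I - {b0}) = n - 1" using b0(1) cardI finI by simp
  have fin0: "finite {a\<in>I. P a b0}" using finI by simp
  have "c b0 \<noteq> 0"
  proof
    assume z: "c b0 = 0"
    then have nP: "\<And>a. a \<in> I \<Longrightarrow> \<not> P a b0" using fin0 by (auto simp: c_def)
    have "\<forall>b\<in>I-{b0}. 3 \<le> c b"
    proof
      fix b assume b: "b \<in> I - {b0}"
      show "3 \<le> c b"
      proof (cases "\<exists>a\<in>I. \<not> P a b")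
        case True
        then obtain a where "a \<in> I" "\<not> P a b" by blast
        then show ?thesis using H'[of a b0 b] b b0 z nP by auto
      next
        case False
        then have "{a\<in>I. P a b} = I" by auto
        then show ?thesis using cardI n by (simp add: c_def)
      qed
    qed
    then have "(\<Sum>b\<in>I-{b0}. 3) \<le> (\<Sum>b\<in>I-{b0}. c b)" by (intro sum_mono) auto
    then show False using sm' rem cardI' n by simp
  qed
  then have "c b0 = 1" using b0 by simp
  then obtain \<alpha> where al: "{a\<in>I. P a b0} = {\<alpha>}" unfolding c_def by (rule card_1_singletonE)
  then have alI: "\<alpha> \<in> I" by blast
  have ge2: "\<forall>b\<in>I-{b0}. 2 \<le> c b"
  proof
    fix b assume b: "b \<in> I - {b0}"
    show "2 \<le> c b"
    proof (cases "\<exists>a\<in>I. a \<noteq> \<alpha> \<and> \<not> P a b")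
      case True
      then obtain a where a: "a \<in> I" "a \<noteq> \<alpha>" "\<not> P a b" by blast
      then have "\<not> P a b0" using al by blast
      then show ?thesis using H'[of a b0 b] b b0 a \<open>c b0 = 1\<close> by auto
    next
      case False
      then have "I - {\<alpha>} \<subseteq> {a\<in>I. P a b}" by auto
      then have "card (I - {\<alpha>}) \<le> c b" unfolding c_def by (intro card_mono) (auto simp: finI)
      then show ?thesis using cardI alI finI n by simp
    qed
  qed
  have eq2: "\<forall>b\<in>I. b \<noteq> b0 \<longrightarrow> c b = 2"
  proof (intro ballI impI, rule ccontr)
    fix b1 assume b1: "b1 \<in> I" "b1 \<noteq> b0" "c b1 \<noteq> 2"
    then have c3: "3 \<le> c b1" using ge2 by force
    have rem2: "(\<Sum>b\<in>I-{b0}. c b) = c b1 + (\<Sum>b\<in>I-{b0}-{b1}. c b)"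
      using b1 finI by (simp add: sum.remove)
    have "(\<Sum>b\<in>I-{b0}-{b1}. 2) \<le> (\<Sum>b\<in>I-{b0}-{b1}. c b)" using ge2 by (intro sum_mono) auto
    moreover have "card (I-{b0}-{b1}) = n - 2" using cardI' b1 finI by simp
    ultimately show False using sm' rem rem2 c3 \<open>c b0 = 1\<close> n by simp
  qed
  show ?thesis using b0(1) alI al eq2 unfolding I_def c_def by blast
qed


lemma cc_eq: "S \<subseteq> KxK_V n \<Longrightarrow> cc S b = card {a\<in>{1..n}. (a,b)\<in>S}"
proof -
  assume S: "S \<subseteq> KxK_V n"
  have "S \<inter> {z. snd z = b} = (\<lambda>a. (a,b)) ` {a\<in>{1..n}. (a,b)\<in>S}" using S by (auto simp: KxK_V_def)
  then show ?thesis unfolding cc_def by (simp add: card_image inj_on_def)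
qed

lemma rc_eq: "S \<subseteq> KxK_V n \<Longrightarrow> rc S a = card {b\<in>{1..n}. (a,b)\<in>S}"
proof -
  assume S: "S \<subseteq> KxK_V n"
  have "S \<inter> {z. fst z = a} = (\<lambda>b. (a,b)) ` {b\<in>{1..n}. (a,b)\<in>S}" using S by (auto simp: KxK_V_def)
  then show ?thesis unfolding rc_def by (simp add: card_image inj_on_def)
qed

lemma card_cc: "S \<subseteq> KxK_V n \<Longrightarrow> card S = (\<Sum>b\<in>{1..n}. cc S b)"
proof -
  assume S: "S \<subseteq> KxK_V n"
  have fin: "finite S" using S finite_V finite_subset by blast
  have "S = (\<Union>b\<in>{1..n}. S \<inter> {z. snd z = b})" using S by (auto simp: KxK_V_def)
  then have "card S = card (\<Union>b\<in>{1..n}. S \<inter> {z. snd z = b})" by simp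
  also have "\<dots> = (\<Sum>b\<in>{1..n}. card (S \<inter> {z. snd z = b}))"
    by (rule card_UN_disjoint) (use fin in auto)
  finally show ?thesis by (simp add: cc_def)
qed

lemma card_rc: "S \<subseteq> KxK_V n \<Longrightarrow> card S = (\<Sum>a\<in>{1..n}. rc S a)"
proof -
  assume S: "S \<subseteq> KxK_V n"
  have fin: "finite S" using S finite_V finite_subset by blast
  have "S = (\<Union>b\<in>{1..n}. S \<inter> {z. fst z = b})" using S by (auto simp: KxK_V_def)
  then have "card S = card (\<Union>b\<in>{1..n}. S \<inter> {z. fst z = b})" by simp
  also have "\<dots> = (\<Sum>b\<in>{1..n}. card (S \<inter> {z. fst z = b}))"
    by (rule card_UN_disjoint) (use fin in auto)
  finally show ?thesis by (simp add: rc_def)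
qed


lemma lower:
  assumes n: "n \<ge> 4" and R: "weak_k_resolving (KxK_V n) KxK_E 3 S"
  shows "2 * n \<le> card S"
proof (rule ccontr)
  assume "\<not> 2 * n \<le> card S"
  then have small: "card S \<le> 2*n - 1" by simp
  have S: "S \<subseteq> KxK_V n" using R by (simp add: weak_k_resolving_def)
  have n3: "n \<ge> 3" using n by simp
  have res: "\<And>x y. x \<in> KxK_V n \<Longrightarrow> y \<in> KxK_V n \<Longrightarrow> x \<noteq> y \<Longrightarrow> 3 \<le> delta_set (KxK_V n) KxK_E S x y"
    using R by (simp add: weak_k_resolving_def)
  have V: "\<And>a b. a \<in> {1..n} \<Longrightarrow> b \<in> {1..n} \<Longrightarrow> (a,b) \<in> KxK_V n" by (simp add: KxK_V_def)
  have A1: "\<exists>b0\<in>{1..n}. \<exists>\<alpha>\<in>{1..n}. {a\<in>{1..n}. (\<lambda>a b. (a,b)\<in>S) a b0} = {\<alpha>} \<and>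
     (\<forall>b\<in>{1..n}. b\<noteq>b0 \<longrightarrow> card {a\<in>{1..n}. (\<lambda>a b. (a,b)\<in>S) a b} = 2)"
  proof (rule abstract[OF n])
    show "(\<Sum>b\<in>{1..n}. card {a\<in>{1..n}. (\<lambda>a b. (a,b)\<in>S) a b}) \<le> 2*n - 1"
      using small card_cc[OF S] cc_eq[OF S] by simp
  next
    fix a b b' assume "a\<in>{1..n}" "b\<in>{1..n}" "b'\<in>{1..n}" "b\<noteq>b'"
    then show "3 \<le> card {a\<in>{1..n}. (\<lambda>a b. (a,b)\<in>S) a b} + card {a\<in>{1..n}. (\<lambda>a b. (a,b)\<in>S) a b'}
       + of_bool ((\<lambda>a b. (a,b)\<in>S) a b) + of_bool ((\<lambda>a b. (a,b)\<in>S) a b')"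
      using res[OF V V, of a b a b'] row_sum[OF n3 S, of a b b'] cc_eq[OF S] by simp
  qed
  then obtain b0 \<alpha> where b0: "b0 \<in> {1..n}" "\<alpha> \<in> {1..n}" "{a\<in>{1..n}. (a,b0)\<in>S} = {\<alpha>}"
     "\<And>b. b\<in>{1..n} \<Longrightarrow> b\<noteq>b0 \<Longrightarrow> cc S b = 2"
    using cc_eq[OF S] by auto
  have A2: "\<exists>b0\<in>{1..n}. \<exists>\<alpha>\<in>{1..n}. {a\<in>{1..n}. (\<lambda>a b. (b,a)\<in>S) a b0} = {\<alpha>} \<and>
     (\<forall>b\<in>{1..n}. b\<noteq>b0 \<longrightarrow> card {a\<in>{1..n}. (\<lambda>a b. (b,a)\<in>S) a b} = 2)"
  proof (rule abstract[OF n])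
    show "(\<Sum>b\<in>{1..n}. card {a\<in>{1..n}. (\<lambda>a b. (b,a)\<in>S) a b}) \<le> 2*n - 1"
      using small card_rc[OF S] rc_eq[OF S] by simp
  next
    fix a b b' assume "a\<in>{1..n}" "b\<in>{1..n}" "b'\<in>{1..n}" "b\<noteq>b'"
    then show "3 \<le> card {a\<in>{1..n}. (\<lambda>a b. (b,a)\<in>S) a b} + card {a\<in>{1..n}. (\<lambda>a b. (b,a)\<in>S) a b'}
       + of_bool ((\<lambda>a b. (b,a)\<in>S) a b) + of_bool ((\<lambda>a b. (b,a)\<in>S) a b')"
      using res[OF V V, of b a b' a] col_sum[OF n3 S, of b b' a] rc_eq[OF S] by simp
  qed
  then obtain a1 \<beta> where a1: "a1 \<in> {1..n}" "\<beta> \<in> {1..n}" "{b\<in>{1..n}. (a1,b)\<in>S} = {\<beta>}"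
     "\<And>a. a\<in>{1..n} \<Longrightarrow> a\<noteq>a1 \<Longrightarrow> rc S a = 2"
    using rc_eq[OF S] by auto
  have cb0: "cc S b0 = 1" using b0(3) cc_eq[OF S] by simp
  have ra1: "rc S a1 = 1" using a1(3) rc_eq[OF S] by simp
  show False
  proof (cases "\<alpha> = a1")
    case True
    then have in1: "(a1,b0) \<in> S" using b0 by blast
    obtain a' where a': "a' \<in> {1..n}" "a' \<noteq> a1" using avoid2[OF n3] by blast
    have "card {b\<in>{1..n}. (a',b)\<in>S} = 2" using a1(4)[OF a'] rc_eq[OF S] by simp
    then have "\<not> {b\<in>{1..n}. (a',b)\<in>S} \<subseteq> {b0}"
      by (metis (no_types, lifting) card.empty card.insert empty_iff finite.intros(1) subset_singletonD zero_neq_numeral numeral_eq_one_iff One_nat_def n_not_Suc_n numeral_2_eq_2 card_1_singleton_iff)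
    then obtain b' where b': "b' \<in> {1..n}" "(a',b') \<in> S" "b' \<noteq> b0" by blast
    have "3 \<le> delta_set (KxK_V n) KxK_E S (a1,b') (a',b0)"
      using res[OF V V] a1 a' b' b0 by auto
    moreover have "delta_set (KxK_V n) KxK_E S (a1,b') (a',b0) + of_bool ((a1,b') \<in> S) + of_bool ((a',b0) \<in> S)
     + 2 * of_bool ((a1,b0) \<in> S) + 2 * of_bool ((a',b') \<in> S) = rc S a1 + rc S a' + cc S b' + cc S b0"
      using diag_sum[OF n3 S a1(1) a'(1) a'(2)[symmetric] b'(1) b0(1) b'(3)] .
    ultimately show False using in1 b' ra1 cb0 a1(4)[OF a'] b0(4)[OF b'(1) b'(3)] by simp
  next
    case False
    have "\<beta> \<noteq> b0"
    proof
      assume "\<beta> = b0"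
      then have "(a1,b0) \<in> S" using a1 by blast
      then have "a1 \<in> {a\<in>{1..n}. (a,b0)\<in>S}" using a1(1) by simp
      then have "a1 \<in> {\<alpha>}" using b0(3) by (simp only:)
      then show False using False by simp
    qed
    have in1: "(a1,\<beta>) \<in> S" "(\<alpha>,b0) \<in> S" using a1 b0 by blast+
    have "3 \<le> delta_set (KxK_V n) KxK_E S (a1,b0) (\<alpha>,\<beta>)"
      using res[OF V V] a1 b0 False by auto
    moreover have "delta_set (KxK_V n) KxK_E S (a1,b0) (\<alpha>,\<beta>) + of_bool ((a1,b0) \<in> S) + of_bool ((\<alpha>,\<beta>) \<in> S)
     + 2 * of_bool ((a1,\<beta>) \<in> S) + 2 * of_bool ((\<alpha>,b0) \<in> S) = rc S a1 + rc S \<alpha> + cc S b0 + cc S \<beta>"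
      using diag_sum[OF n3 S a1(1) b0(2) False[symmetric] b0(1) a1(2) \<open>\<beta> \<noteq> b0\<close>[symmetric]] .
    ultimately show False using in1 ra1 cb0 a1(4)[OF b0(2) False] b0(4)[OF a1(2) \<open>\<beta> \<noteq> b0\<close>] by simp
  qed
qed


definition sc :: "nat \<Rightarrow> nat \<Rightarrow> nat" where "sc n a = (if a < n then a + 1 else 1)"
definition S0 :: "nat \<Rightarrow> (nat \<times> nat) set" where
  "S0 n = {(a,b). a \<in> {1..n} \<and> b \<in> {1..n} \<and> (b = a \<or> b = sc n a)}"

lemma S0_sub: "S0 n \<subseteq> KxK_V n" by (auto simp: S0_def KxK_V_def)

lemma S0_rc: "n \<ge> 3 \<Longrightarrow> a \<in> {1..n} \<Longrightarrow> rc (S0 n) a = 2"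
proof -
  assume n: "n \<ge> 3" and a: "a \<in> {1..n}"
  have "{b\<in>{1..n}. (a,b)\<in>S0 n} = {a, sc n a}" using a n by (auto simp: S0_def sc_def)
  moreover have "a \<noteq> sc n a" using n by (auto simp: sc_def)
  ultimately show ?thesis using rc_eq[OF S0_sub] by simp
qed

lemma S0_cc: "n \<ge> 3 \<Longrightarrow> b \<in> {1..n} \<Longrightarrow> cc (S0 n) b = 2"
proof -
  assume n: "n \<ge> 3" and b: "b \<in> {1..n}"
  have "{a\<in>{1..n}. (a,b)\<in>S0 n} = {b, if b = 1 then n else b - 1}" using b n by (auto simp: S0_def sc_def)
  moreover have "b \<noteq> (if b = 1 then n else b - 1)" using n b by auto
  ultimately show ?thesis using cc_eq[OF S0_sub] by simp
qed

lemma S0_card: "n \<ge> 3 \<Longrightarrow> card (S0 n) = 2 * n"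
  using card_cc[OF S0_sub, of n] S0_cc by simp

lemma S0_norect: "n \<ge> 3 \<Longrightarrow> a \<noteq> a' \<Longrightarrow> b \<noteq> b' \<Longrightarrow>
  (a,b) \<in> S0 n \<Longrightarrow> (a',b') \<in> S0 n \<Longrightarrow> (a,b') \<in> S0 n \<Longrightarrow> (a',b) \<in> S0 n \<Longrightarrow> False"
  by (auto simp: S0_def sc_def split: if_splits)

lemma S0_res: "n \<ge> 3 \<Longrightarrow> weak_k_resolving (KxK_V n) KxK_E 3 (S0 n)"
  unfolding weak_k_resolving_def
proof (intro conjI S0_sub ballI impI)
  fix x y assume n: "n \<ge> 3" and x: "x \<in> KxK_V n" and y: "y \<in> KxK_V n" and xy: "x \<noteq> y"
  obtain a b a' b' where e: "x = (a,b)" "y = (a',b')" by fastforce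
  have ab: "a \<in> {1..n}" "b \<in> {1..n}" "a' \<in> {1..n}" "b' \<in> {1..n}" using x y e by (auto simp: KxK_V_def)
  show "3 \<le> delta_set (KxK_V n) KxK_E (S0 n) x y"
  proof (cases "a = a'")
    case True
    then have "b \<noteq> b'" using xy e by simp
    then show ?thesis using row_sum[OF n S0_sub ab(1) ab(2) ab(4)] S0_cc[OF n] ab e True by simp
  next
    case ne: False
    show ?thesis
    proof (cases "b = b'")
      case True
      then show ?thesis using col_sum[OF n S0_sub ab(1) ab(3) ne ab(2)] S0_rc[OF n] ab e by simp
    next
      case False
      have "\<not> ((a,b) \<in> S0 n \<and> (a',b') \<in> S0 n \<and> (a,b') \<in> S0 n \<and> (a',b) \<in> S0 n)"
        using S0_norect[OF n ne False] by blast
      then show ?thesis using diag_sum[OF n S0_sub ab(1) ab(3) ne ab(2) ab(4) False] S0_rc[OF n] S0_cc[OF n] ab e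
        by (auto simp: of_bool_def split: if_splits)
    qed
  qed
qed

theorem mainTheorem4:
  fixes n :: nat
  assumes "n \<ge> 4"
  shows "wdim (KxK_V n) KxK_E 3 = 2 * n"
  unfolding wdim_def
proof (rule Least_equality)
  show "\<exists>S. weak_k_resolving (KxK_V n) KxK_E 3 S \<and> card S = 2 * n"
    using S0_res S0_card assms by (intro exI[of _ "S0 n"]) simp
next
  fix m assume "\<exists>S. weak_k_resolving (KxK_V n) KxK_E 3 S \<and> card S = m"
  then show "2 * n \<le> m" using lower[OF assms] by blast
qed

end
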